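(* Consider the multi-queue bandit under Q-ThS(match) as described in the context. For every $u\in[U]$ and every $t\ge1$, almost surely $$Q_u(t)-Q^*_u(t)\le\sum_{l=t-B_u(t)+1}^{t}\left(\mathsf E(l)+\sum_{k\ne k^*_u}\mathsf I_{uk}(l)\right),$$ where $B_u(t)=\min\{s\ge0:Q_u(t-s)=0\}$.
   Context: Discrete-time system with $U$ queues and $K$ servers, $1\le U\le K$. Arrivals $A_u(t)\in\{0,1\}$ to queue $u$ are Bernoulli($\lambda_u$), and the service $R_{uk}(t)\in\{0,1\}$ of server $k$ to queue $u$ is Bernoulli($\mu_{uk}$); all mutually independent and i.i.d. across slots. Each slot a matching is scheduled; $\kappa_u(t)$ is the server assigned to queue $u$, $S_u(t)=R_{u\kappa_u(t)}(t)$, $Q_u(t)=(Q_u(t-1)+A_u(t)-S_u(t))^+$. For each $u$, $k^*_u$ is the unique maximizer of $\mu_{uk}$ over $k$ (distinct across queues). The genie queue is $Q^*_u(t)=(Q^*_u(t-1)+A_u(t)-R_{uk^*_u}(t))^+$ with the same arrivals and services; $Q^*_u(0)\ge0$. $B_u(t)$ is the time elapsed since queue $u$ was last empty (time $t-B_u(t)$ is the last instant at or before $t$ with $Q_u=0$). Algorithm Q-ThS(match): at each time $l$ an independent Bernoulli exploration indicator $\mathsf E(l)$ (mean $\min\{1,3K\log^2l/l\}$) decides whether a matching is scheduled by exploration ($\mathsf E(l)=1$: uniformly random from a fixed set of $K$ matchings covering all pairs) or by exploitation (Thompson sampling with Beta posteriors, projected onto matchings). $\mathsf I_{uk}(l)$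 is the indicator that server $k$ is assigned to queue $u$ at time $l$ in an exploit step. *)

theory Defs
  imports "HOL-Analysis.Analysis"
begin

text \<open>Sample-path model. Queues are indexed by u < U, servers by k < K, time by nat.
  A matching at time l is a map sigma l : queues -> servers, injective on {..<U}.\<close>

definition is_matching :: "nat \<Rightarrow> nat \<Rightarrow> (nat \<Rightarrow> nat) \<Rightarrow> bool" where
  "is_matching U K m \<longleftrightarrow> (\<forall>u<U. m u < K) \<and> inj_on m {..<U}"

definition last_empty_gap :: "(nat \<Rightarrow> int) \<Rightarrow> nat \<Rightarrow> nat" where
  "last_empty_gap q t = (LEAST s. s \<le> t \<and> q (t - s) = 0)"

definition exploit_ind :: "(nat \<Rightarrow> nat) \<Rightarrow> (nat \<Rightarrow> nat \<Rightarrow> nat) \<Rightarrow> nat \<Rightarrow> nat \<Rightarrow> nat \<Rightarrow> int" where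
  "exploit_ind E \<sigma> u k l = (if E l = 0 \<and> \<sigma> l u = k then 1 else 0)"

end

theory Submission
  imports Defs
begin

theorem lemma3:
  fixes U K :: nat
    and A :: "nat \<Rightarrow> nat \<Rightarrow> int"          \<comment> \<open>A u t\<close>
    and R :: "nat \<Rightarrow> nat \<Rightarrow> nat \<Rightarrow> int"  \<comment> \<open>R u k t\<close>
    and \<mu> :: "nat \<Rightarrow> nat \<Rightarrow> real"
    and kstar :: "nat \<Rightarrow> nat"
    and E :: "nat \<Rightarrow> nat"                  \<comment> \<open>exploration indicator E(l)\<close>
    and \<sigma> :: "nat \<Rightarrow> nat \<Rightarrow> nat"            \<comment> \<open>\<sigma> l u = \<kappa>_u(l)\<close>
    and Xs :: "(nat \<Rightarrow> nat) set"          \<comment> \<open>fixed exploration matchings\<close>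
    and Q Qs :: "nat \<Rightarrow> nat \<Rightarrow> int"
    and u t :: nat
  assumes UK: "1 \<le> U" "U \<le> K"
    and A01: "\<And>v l. A v l \<in> {0, 1}"
    and R01: "\<And>v k l. R v k l \<in> {0, 1}"
    and kstar_range: "\<And>v. v < U \<Longrightarrow> kstar v < K"
    and kstar_max: "\<And>v k. v < U \<Longrightarrow> k < K \<Longrightarrow> k \<noteq> kstar v \<Longrightarrow> \<mu> v k < \<mu> v (kstar v)"
    and kstar_distinct: "inj_on kstar {..<U}"
    and Xs_card: "card Xs = K"
    and Xs_match: "\<And>m. m \<in> Xs \<Longrightarrow> is_matching U K m"
    and Xs_cover: "\<And>v k. v < U \<Longrightarrow> k < K \<Longrightarrow> \<exists>m\<in>Xs. m v = k"
    and E01: "\<And>l. E l \<in> {0, 1}"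
    and sched: "\<And>l. is_matching U K (\<sigma> l)"
    and explore: "\<And>l. E l = 1 \<Longrightarrow> \<sigma> l \<in> Xs"
    and Q0: "\<And>v. Q v 0 = 0"
    and Qrec: "\<And>v l. Q v (Suc l) = max 0 (Q v l + A v (Suc l) - R v (\<sigma> (Suc l) v) (Suc l))"
    and Qs0: "\<And>v. Qs v 0 \<ge> 0"
    and Qsrec: "\<And>v l. Qs v (Suc l) = max 0 (Qs v l + A v (Suc l) - R v (kstar v) (Suc l))"
    and u: "u < U"
    and t: "1 \<le> t"
  shows "Q u t - Qs u t \<le>
    (\<Sum>l = t - last_empty_gap (Q u) t + 1 .. t.
        int (E l) + (\<Sum>k\<in>{..<K} - {kstar u}. exploit_ind E \<sigma> u k l))"
proof -
  define c where "c l = int (E l) + (\<Sum>k\<in>{..<K} - {kstar u}. exploit_ind E \<sigma> u k l)" for l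
  define B where "B = last_empty_gap (Q u) t"
  have ex: "\<exists>s. s \<le> t \<and> Q u (t - s) = 0" using Q0 by (intro exI[of _ t]) simp
  have B1: "B \<le> t \<and> Q u (t - B) = 0" unfolding B_def last_empty_gap_def by (rule LeastI_ex[OF ex])
  have B2: "Q u (t - s) \<noteq> 0" if "s < B" for s
  proof
    assume "Q u (t - s) = 0"
    hence "B \<le> s" using that B1 unfolding B_def last_empty_gap_def by (intro Least_le) simp
    thus False using that by simp
  qed
  define s0 where "s0 = t - B"
  have Qnn: "Q u l \<ge> 0" for l by (cases l) (simp_all add: Q0 Qrec)
  have Qsnn: "Qs u l \<ge> 0" for l by (cases l) (simp_all add: Qs0 Qsrec)
  have cnn: "c l \<ge> 0" for l unfolding c_def exploit_ind_def by (intro add_nonneg_nonneg sum_nonneg) auto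
  have cstep: "R u (kstar u) l - R u (\<sigma> l u) l \<le> c l" for l
  proof (cases "\<sigma> l u = kstar u")
    case True thus ?thesis using cnn[of l] by simp
  next
    case False
    have r: "R u (kstar u) l - R u (\<sigma> l u) l \<le> 1" using R01[of u "kstar u" l] R01[of u "\<sigma> l u" l] by auto
    show ?thesis
    proof (cases "E l = 1")
      case True
      have "0 \<le> (\<Sum>k\<in>{..<K} - {kstar u}. exploit_ind E \<sigma> u k l)"
        unfolding exploit_ind_def by (intro sum_nonneg) auto
      thus ?thesis using r True unfolding c_def by simp
    next
      case E0: False
      hence E0': "E l = 0" using E01[of l] by auto
      have mem: "\<sigma> l u \<in> {..<K} - {kstar u}" using sched[of l] u False unfolding is_matching_def by auto
      have "1 \<le> (\<Sum>k\<in>{..<K} - {kstar u}. exploit_ind E \<sigma> u k l)"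
      proof -
        have a: "exploit_ind E \<sigma> u (\<sigma> l u) l = 1" using E0' unfolding exploit_ind_def by simp
        have "exploit_ind E \<sigma> u (\<sigma> l u) l \<le> (\<Sum>k\<in>{..<K} - {kstar u}. exploit_ind E \<sigma> u k l)"
          by (rule member_le_sum[OF mem]) (auto simp: exploit_ind_def)
        thus ?thesis using a by simp
      qed
      thus ?thesis using r unfolding c_def by simp
    qed
  qed
  have main: "j \<le> B \<Longrightarrow> Q u (s0 + j) - Qs u (s0 + j) \<le> (\<Sum>l = s0 + 1 .. s0 + j. c l)" for j
  proof (induction j)
    case 0
    thus ?case using B1 Qsnn[of s0] unfolding s0_def by auto
  next
    case (Suc j)
    have e: "t - (B - Suc j) = Suc (s0 + j)" using Suc.prems B1 unfolding s0_def by (simp add: Suc_diff_le)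
    have pos: "Q u (Suc (s0 + j)) \<noteq> 0"
      using B2[of "B - Suc j"] Suc.prems e by simp
    hence q: "Q u (Suc (s0 + j)) = Q u (s0 + j) + A u (Suc (s0+j)) - R u (\<sigma> (Suc (s0+j)) u) (Suc (s0+j))"
      using Qrec[of u "s0+j"] by (auto simp: max_def split: if_splits)
    have qs: "Qs u (Suc (s0 + j)) \<ge> Qs u (s0 + j) + A u (Suc (s0+j)) - R u (kstar u) (Suc (s0+j))"
      using Qsrec[of u "s0+j"] by simp
    have "(\<Sum>l = s0 + 1 .. s0 + Suc j. c l) = (\<Sum>l = s0 + 1 .. s0 + j. c l) + c (Suc (s0 + j))"
      by (simp add: sum.cl_ivl_Suc)
    thus ?case using Suc.IH Suc.prems q qs cstep[of "Suc (s0+j)"] by simp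
  qed
  have "s0 + B = t" using B1 unfolding s0_def by auto
  thus ?thesis using main[of B] unfolding c_def s0_def B_def by simp
qed

end
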